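(* For integers $s,t\ge0$ let $m_{i,j}^{s,t}=\int_{(0,1)^2}\frac{x^{s+i}y^{s+j}}{x+y}\left(\frac{1-x}{1+x}\right)^t\left(\frac{1-y}{1+y}\right)^tdx\,dy$, $\tau_n^{s,t}=\det(m_{i,j}^{s,t})_{i,j=0}^{n-1}$, $\xi_n^{s,t}=\det(m_{i,j+1}^{s,t})_{i,j=0}^{n-1}$ (with $\tau_0^{s,t}=\xi_0^{s,t}=1$), $$P_n^{s,t}(x)=\frac{1}{\tau_n^{s,t}}\det\begin{pmatrix} m_{0,0}^{s,t}&\cdots&m_{0,n-1}^{s,t}&1\\ \vdots&&\vdots&\vdots\\ m_{n,0}^{s,t}&\cdots&m_{n,n-1}^{s,t}&x^n\end{pmatrix},\qquad Q_n^{s,t}(x)=\frac{1}{\xi_n^{s,t}}\det\begin{pmatrix} m_{0,1}^{s,t}&\cdots&m_{0,n}^{s,t}&1\\ \vdots&&\vdots&\vdots\\ m_{n,1}^{s,t}&\cdots&m_{n,n}^{s,t}&x^n\end{pmatrix}.$$ Then for all $n\ge0$ and $s,t\ge0$, $$P_n^{s+1,t}(x)=\frac1x\left(P_{n+1}^{s,t}(x)+\frac{\xi_n^{s,t}\xi_{n+1}^{s,t}}{\tau_n^{s+1,t}\tau_{n+1}^{s,t}}Q_n^{s,t}(x)\right).$$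
   Context: $m_{i,j}^{s,t}=\langle x^i,y^j\rangle_{s,t}$ for the bilinear form $\langle f,g\rangle_{s,t}=\int_{(0,1)^2}\frac{x^sy^s}{x+y}f(x)g(y)\left(\frac{1-x}{1+x}\right)^t\left(\frac{1-y}{1+y}\right)^tdx\,dy$. The determinants $\tau_n^{s,t},\xi_n^{s,t}$ are positive. $P_n^{s,t}$ are the monic Cauchy–Jacobi bi-orthogonal polynomials and $Q_n^{s,t}$ the monic "adjacent" polynomials (determined by $\langle Q_n^{s,t}(x),y^i\rangle_{s,t}=0$ for $1\le i\le n$). *)

theory Defs
  imports "HOL-Analysis.Analysis" "Jordan_Normal_Form.Determinant"
begin

definition mom :: "nat \<Rightarrow> nat \<Rightarrow> nat \<Rightarrow> nat \<Rightarrow> real" where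
  "mom s t i j = (LINT p : {0<..<1} \<times> {0<..<1} | lborel.
      (fst p ^ (s + i) * snd p ^ (s + j) / (fst p + snd p))
      * ((1 - fst p) / (1 + fst p)) ^ t * ((1 - snd p) / (1 + snd p)) ^ t)"

definition tau :: "nat \<Rightarrow> nat \<Rightarrow> nat \<Rightarrow> real" where
  "tau s t n = Determinant.det (Matrix.mat n n (\<lambda>(i, j). mom s t i j))"

definition xi :: "nat \<Rightarrow> nat \<Rightarrow> nat \<Rightarrow> real" where
  "xi s t n = Determinant.det (Matrix.mat n n (\<lambda>(i, j). mom s t i (j + 1)))"

definition Pcj :: "nat \<Rightarrow> nat \<Rightarrow> nat \<Rightarrow> real \<Rightarrow> real" where
  "Pcj s t n x = Determinant.det (Matrix.mat (n + 1) (n + 1)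
      (\<lambda>(i, j). if j < n then mom s t i j else x ^ i)) / tau s t n"

definition Qcj :: "nat \<Rightarrow> nat \<Rightarrow> nat \<Rightarrow> real \<Rightarrow> real" where
  "Qcj s t n x = Determinant.det (Matrix.mat (n + 1) (n + 1)
      (\<lambda>(i, j). if j < n then mom s t i (j + 1) else x ^ i)) / xi s t n"

end

theory Submission
  imports Defs "HOL-Computational_Algebra.Polynomial"
begin

definition Wt :: "nat \<Rightarrow> nat \<Rightarrow> real \<Rightarrow> real" where
  "Wt s t x = x ^ s * ((1 - x) / (1 + x)) ^ t"

definition Kf :: "nat \<Rightarrow> nat \<Rightarrow> nat \<Rightarrow> nat \<Rightarrow> real \<times> real \<Rightarrow> real" where
  "Kf s t i j p = (fst p ^ (s + i) * snd p ^ (s + j) / (fst p + snd p))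
      * ((1 - fst p) / (1 + fst p)) ^ t * ((1 - snd p) / (1 + snd p)) ^ t"

abbreviation sq :: "(real \<times> real) set" where "sq \<equiv> {0<..<1} \<times> {0<..<1}"

lemma mom_Kf: "mom s t i j = (LINT p:sq|(lborel \<Otimes>\<^sub>M lborel). Kf s t i j p)"
  unfolding mom_def Kf_def lborel_prod ..

lemma Kf_meas[measurable]: "Kf s t i j \<in> borel_measurable (lborel \<Otimes>\<^sub>M lborel)"
  unfolding Kf_def by measurable

lemma Wt_bounds: "0 < x \<Longrightarrow> x < 1 \<Longrightarrow> 0 < Wt s t x \<and> Wt s t x \<le> 1"
proof -
  assume x: "0 < x" "x < 1"
  have a: "0 < (1 - x) / (1 + x)" "(1 - x) / (1 + x) \<le> 1" using x by auto
  have "0 < x ^ s" "x ^ s \<le> 1" using x by (auto intro: power_le_one)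
  moreover have "0 < ((1 - x) / (1 + x)) ^ t" "((1 - x) / (1 + x)) ^ t \<le> 1" using a by (auto intro: power_le_one)
  ultimately show ?thesis unfolding Wt_def by (auto intro: mult_le_one)
qed

lemma Kf_eq: "Kf s t i j (x, y) = x ^ i * y ^ j * Wt s t x * Wt s t y / (x + y)"
  unfolding Kf_def Wt_def by (simp add: power_add mult_ac)

lemma sqrt_bound: "0 < x \<Longrightarrow> 0 < y \<Longrightarrow> 1 / (x + y) \<le> 1 / sqrt x * (1 / sqrt (y::real))"
proof -
  assume x: "0 < x" and y: "0 < y"
  have "x * y \<le> (x + y)^2" using x y by (simp add: power2_eq_square algebra_simps)
  hence "(sqrt x * sqrt y)^2 \<le> (x + y)^2" using x y by (simp add: power_mult_distrib)
  hence "sqrt x * sqrt y \<le> x + y" by (rule power2_le_imp_le) (use x y in auto)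
  thus ?thesis using x y by (simp add: divide_simps)
qed

lemma int_inv_sqrt: "set_integrable lborel {0<..<1::real} (\<lambda>x. 1 / sqrt x)"
proof -
  have "(\<lambda>x::real. x powr (-1/2)) integrable_on {0<..1}"
    by (rule integrable_on_powr_from_0') auto
  moreover have "x \<in> {0<..1} \<Longrightarrow> x powr (-1/2) = 1 / sqrt x" for x :: real
    by (simp add: powr_minus_divide powr_half_sqrt)
  ultimately have "(\<lambda>x::real. 1 / sqrt x) integrable_on {0<..1}"
    using Henstock_Kurzweil_Integration.integrable_cong[of "{0<..1}" "\<lambda>x::real. x powr (-1/2)" "\<lambda>x. 1 / sqrt x"] by simp
  hence "(\<lambda>x::real. 1 / sqrt x) absolutely_integrable_on {0<..1}"
    by (rule nonnegative_absolutely_integrable_1) auto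
  hence "set_integrable lborel {0<..1::real} (\<lambda>x. 1 / sqrt x)"
    unfolding set_integrable_def by (subst (asm) integrable_completion) auto
  thus ?thesis by (rule set_integrable_subset) auto
qed

lemma integrable_prod_mult:
  fixes f g :: "real \<Rightarrow> real"
  assumes f: "integrable lborel f" and g: "integrable lborel g"
  shows "integrable (lborel \<Otimes>\<^sub>M lborel) (\<lambda>z. f (fst z) * g (snd z))"
proof -
  have [measurable]: "f \<in> borel_measurable lborel" "g \<in> borel_measurable lborel" using f g by auto
  have "(\<integral>\<^sup>+z. ennreal (norm (f (fst z) * g (snd z))) \<partial>(lborel \<Otimes>\<^sub>M lborel))
      = (\<integral>\<^sup>+x. \<integral>\<^sup>+y. ennreal (norm (f x)) * ennreal (norm (g y)) \<partial>lborel \<partial>lborel)"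
    by (subst lborel.nn_integral_fst[symmetric]) (auto simp: abs_mult ennreal_mult intro!: nn_integral_cong)
  also have "\<dots> = (\<integral>\<^sup>+x. ennreal (norm (f x)) * (\<integral>\<^sup>+y. ennreal (norm (g y)) \<partial>lborel) \<partial>lborel)"
    by (simp add: nn_integral_cmult)
  also have "\<dots> = (\<integral>\<^sup>+x. ennreal (norm (f x)) \<partial>lborel) * (\<integral>\<^sup>+y. ennreal (norm (g y)) \<partial>lborel)"
    by (simp add: nn_integral_multc)
  also have "\<dots> < \<infinity>" using f g by (simp add: integrable_iff_bounded ennreal_mult_less_top)
  finally show ?thesis by (simp add: integrable_iff_bounded)
qed

lemma Kf_int: "set_integrable (lborel \<Otimes>\<^sub>M lborel) sq (Kf s t i j)"
proof -
  define F where "F x = indicator {0<..<1::real} x * (1 / sqrt x)" for x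
  have F: "integrable lborel F" using int_inv_sqrt unfolding set_integrable_def F_def by simp
  have G: "integrable (lborel \<Otimes>\<^sub>M lborel) (\<lambda>z. F (fst z) * F (snd z))"
    by (rule integrable_prod_mult[OF F F])
  show ?thesis unfolding set_integrable_def
  proof (rule Bochner_Integration.integrable_bound[OF G])
    show "(\<lambda>z. indicator sq z *\<^sub>R Kf s t i j z) \<in> borel_measurable (lborel \<Otimes>\<^sub>M lborel)"
      by measurable
    show "AE z in lborel \<Otimes>\<^sub>M lborel. norm (indicator sq z *\<^sub>R Kf s t i j z) \<le> norm (F (fst z) * F (snd z))"
    proof (rule AE_I2)
      fix z :: "real \<times> real"
      obtain x y where z: "z = (x, y)" by (cases z)
      show "norm (indicator sq z *\<^sub>R Kf s t i j z) \<le> norm (F (fst z) * F (snd z))"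
      proof (cases "z \<in> sq")
        case False thus ?thesis by simp
      next
        case True
        hence xy: "0 < x" "x < 1" "0 < y" "y < 1" using z by auto
        have w: "0 < Wt s t x" "Wt s t x \<le> 1" "0 < Wt s t y" "Wt s t y \<le> 1" using Wt_bounds xy by auto
        have p: "x ^ i \<le> 1" "y ^ j \<le> 1" using xy by (auto intro: power_le_one)
        have "x ^ i * y ^ j * Wt s t x * Wt s t y \<le> 1"
          using w p xy by (intro mult_le_one) auto
        moreover have "0 \<le> x ^ i * y ^ j * Wt s t x * Wt s t y" using w xy by simp
        ultimately have "\<bar>x ^ i * y ^ j * Wt s t x * Wt s t y / (x + y)\<bar> \<le> 1 / (x + y)"
          using xy by (simp add: divide_right_mono)
        also have "\<dots> \<le> 1 / sqrt x * (1 / sqrt y)" by (rule sqrt_bound) (use xy in auto)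
        finally show ?thesis using True xy z by (simp add: Kf_eq F_def)
      qed
    qed
  qed
qed

lemma mom_sym: "mom s t i j = mom s t j i"
proof -
  have m: "(\<lambda>z. indicator sq z * Kf s t j i z) \<in> borel_measurable (lborel \<Otimes>\<^sub>M lborel)" by measurable
  have "mom s t j i = (\<integral>z. indicator sq z * Kf s t j i z \<partial>(lborel \<Otimes>\<^sub>M lborel))"
    unfolding mom_Kf set_lebesgue_integral_def by simp
  also have "\<dots> = (\<integral>(x,y). indicator sq (y,x) * Kf s t j i (y,x) \<partial>(lborel \<Otimes>\<^sub>M lborel))"
    using lborel_pair.integral_product_swap[OF m] by (simp add: case_prod_unfold)
  also have "\<dots> = (\<integral>z. indicator sq z * Kf s t i j z \<partial>(lborel \<Otimes>\<^sub>M lborel))"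
    by (intro Bochner_Integration.integral_cong refl) (auto simp: Kf_eq mult_ac indicator_def add.commute)
  also have "\<dots> = mom s t i j" unfolding mom_Kf set_lebesgue_integral_def by simp
  finally show ?thesis ..
qed

definition PhiL :: "nat \<Rightarrow> nat \<Rightarrow> (real \<Rightarrow> real) \<Rightarrow> real \<Rightarrow> real" where
  "PhiL s t p x = (LINT y:{0<..<1}|lborel. p y * Wt s t y / (x + y))"

lemma fub:
  fixes v :: "nat \<Rightarrow> real" and N e s t i a :: nat
  defines "p \<equiv> (\<lambda>y. (\<Sum>j<N. v j * y^(j+e)))"
  shows "(\<Sum>j<N. v j * mom s t (i+a) (j+e)) = (LINT x:{0<..<1}|lborel. x^(i+a) * Wt s t x * PhiL s t p x)"
    and "set_integrable lborel {0<..<1} (\<lambda>x. x^(i+a) * Wt s t x * PhiL s t p x)"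
proof -
  define H where "H z = (\<Sum>j<N. v j * (indicator sq z * Kf s t (i+a) (j+e) z))" for z
  have KI: "integrable (lborel \<Otimes>\<^sub>M lborel) (\<lambda>z. indicator sq z * Kf s t i' j' z)" for i' j'
    using Kf_int[of s t i' j'] by (simp add: set_integrable_def)
  have Hint: "integrable (lborel \<Otimes>\<^sub>M lborel) H"
    unfolding H_def by (rule Bochner_Integration.integrable_sum, rule integrable_mult_right, rule KI)
  have e1: "(\<Sum>j<N. v j * mom s t (i+a) (j+e)) = integral\<^sup>L (lborel \<Otimes>\<^sub>M lborel) H"
  proof -
    have "integral\<^sup>L (lborel \<Otimes>\<^sub>M lborel) H = (\<Sum>j<N. LINT z|(lborel \<Otimes>\<^sub>M lborel). v j * (indicator sq z * Kf s t (i+a) (j+e) z))"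
      unfolding H_def by (rule Bochner_Integration.integral_sum) (rule integrable_mult_right, rule KI)
    thus ?thesis unfolding mom_Kf set_lebesgue_integral_def by simp
  qed
  have Hxy: "H (x, y) = indicator {0<..<1} x * (x^(i+a) * Wt s t x * (indicator {0<..<1} y * (p y * Wt s t y / (x + y))))"
    for x y
    unfolding H_def p_def
    by (simp add: Kf_eq indicator_times sum_distrib_left sum_distrib_right sum_divide_distrib power_add mult_ac)
  have inner: "(LBINT y. H (x, y)) = indicator {0<..<1} x * (x^(i+a) * Wt s t x * PhiL s t p x)" for x
    unfolding Hxy PhiL_def set_lebesgue_integral_def by (simp only: integral_mult_right_zero real_scaleR_def)
  have "integral\<^sup>L (lborel \<Otimes>\<^sub>M lborel) H = (LBINT x. LBINT y. H (x, y))"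
    by (rule lborel_pair.integral_fst'[OF Hint, symmetric])
  also have "\<dots> = (LINT x:{0<..<1}|lborel. x^(i+a) * Wt s t x * PhiL s t p x)"
    unfolding inner set_lebesgue_integral_def by simp
  finally show "(\<Sum>j<N. v j * mom s t (i+a) (j+e)) = (LINT x:{0<..<1}|lborel. x^(i+a) * Wt s t x * PhiL s t p x)"
    using e1 by simp
  have "integrable lborel (\<lambda>x. LBINT y. H (x, y))" by (rule lborel_pair.integrable_fst'[OF Hint])
  thus "set_integrable lborel {0<..<1} (\<lambda>x. x^(i+a) * Wt s t x * PhiL s t p x)"
    unfolding inner set_integrable_def by simp
qed

lemma int_cmul: "integral S (\<lambda>y. c * f y) = c * integral S (f::real\<Rightarrow>real)"
  using integral_cmul[of S c f] by simp

lemma Wt_cont: "continuous_on {0..1} (Wt s t)"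
  unfolding Wt_def by (intro continuous_intros) auto

definition Psi :: "nat \<Rightarrow> nat \<Rightarrow> nat \<Rightarrow> (real \<Rightarrow> real) \<Rightarrow> real \<Rightarrow> real" where
  "Psi s t j p x = integral {0..1} (\<lambda>y. p y * Wt s t y / (x + y) ^ j)"

lemma integrand_cont:
  assumes p: "continuous_on {0..1} p" and x: "0 < x"
  shows "continuous_on {0..1} (\<lambda>y. p y * Wt s t y / (x + y) ^ j)"
  using x by (intro continuous_intros p Wt_cont) auto

lemma PhiL_Psi:
  assumes p: "continuous_on {0..1} p" and x: "0 < x"
  shows "PhiL s t p x = Psi s t 1 p x"
proof -
  let ?f = "\<lambda>y. p y * Wt s t y / (x + y)"
  have c: "continuous_on {0..1} ?f" using integrand_cont[OF p x, of s t 1] by simp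
  have "set_integrable lborel {0..1} ?f" by (rule borel_integrable_atLeastAtMost'[OF c])
  hence "set_integrable lborel {0<..<1} ?f" by (rule set_integrable_subset) auto
  hence "PhiL s t p x = integral {0<..<1} ?f"
    unfolding PhiL_def by (rule set_borel_integral_eq_integral(2))
  also have "\<dots> = integral {0..1} ?f" by (rule integral_open_interval_real[symmetric])
  finally show ?thesis unfolding Psi_def by simp
qed

lemma aux_div:
  fixes u v :: real
  assumes u: "u \<noteq> 0"
  shows "(of_nat j * (1 * v ^ (Suc k - Suc 0)) * u ^ Suc k - v ^ Suc k * (of_nat j * (1 * u ^ (Suc k - Suc 0))))
      / (u ^ Suc k * u ^ Suc k) = of_nat j * v ^ (Suc k - 1) * (u - v) / u ^ (Suc k + 1)"
proof -
  have n: "of_nat j * (1 * v ^ (Suc k - Suc 0)) * u ^ Suc k - v ^ Suc k * (of_nat j * (1 * u ^ (Suc k - Suc 0)))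
     = u ^ k * (of_nat j * v ^ (Suc k - 1) * (u - v))" by (simp add: algebra_simps)
  have d: "u ^ Suc k * u ^ Suc k = u ^ k * u ^ (Suc k + 1)" by (simp add: power_add[symmetric])
  show ?thesis unfolding n d using u by simp
qed

lemma Dlem:
  assumes p: "continuous_on {0..1} p" and j: "1 \<le> j" and z: "0 < z" and x: "0 < x"
  shows "((\<lambda>x. (x + z) ^ j * Psi s t j p x) has_real_derivative
           (j * (x + z) ^ (j - 1) * Psi s t (j + 1) (\<lambda>y. (y - z) * p y) x)) (at x)"
proof -
  define f where "f x y = p y * Wt s t y * ((x + z) ^ j / (x + y) ^ j)" for x y
  define fx where "fx x y = p y * Wt s t y * (j * (x + z) ^ (j - 1) * (y - z) / (x + y) ^ (j + 1))" for x y
  have eq1: "(x + z) ^ j * Psi s t j p x = integral (cbox 0 1) (f x)" for x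
    unfolding Psi_def f_def cbox_interval int_cmul[symmetric] by (simp add: mult_ac)
  have eq2: "integral (cbox 0 1) (fx x) = j * (x + z) ^ (j - 1) * Psi s t (j + 1) (\<lambda>y. (y - z) * p y) x"
    unfolding Psi_def fx_def cbox_interval int_cmul[symmetric] by (simp add: mult_ac)
  have "((\<lambda>x. integral (cbox 0 1) (f x)) has_field_derivative integral (cbox 0 1) (fx x)) (at x within {0<..})"
  proof (rule leibniz_rule_field_derivative)
    fix x w :: real assume xt: "x \<in> {0<..}" "w \<in> cbox (0::real) 1"
    hence xt': "0 < x" "0 \<le> w" using xt by (auto simp: cbox_interval)
    have "((\<lambda>x. (x + z) ^ j / (x + w) ^ j) has_field_derivative
           (j * (x + z) ^ (j - 1) * (w - z) / (x + w) ^ (j + 1))) (at x within {0<..})"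
    proof -
      have d1: "((\<lambda>x. x + z) has_field_derivative 1) (at x within {0<..})"
        by (auto intro!: derivative_eq_intros)
      have d2: "((\<lambda>x. x + w) has_field_derivative 1) (at x within {0<..})"
        by (auto intro!: derivative_eq_intros)
      have "((\<lambda>x. (x + z) ^ j / (x + w) ^ j) has_field_derivative
           ((of_nat j * (1 * (x + z) ^ (j - Suc 0))) * (x + w) ^ j - (x + z) ^ j * (of_nat j * (1 * (x + w) ^ (j - Suc 0))))
             / ((x + w) ^ j * (x + w) ^ j)) (at x within {0<..})"
        using xt' by (intro DERIV_divide DERIV_power d1 d2) auto
      moreover have "((of_nat j * (1 * (x + z) ^ (j - Suc 0))) * (x + w) ^ j - (x + z) ^ j * (of_nat j * (1 * (x + w) ^ (j - Suc 0))))
             / ((x + w) ^ j * (x + w) ^ j) = j * (x + z) ^ (j - 1) * (w - z) / (x + w) ^ (j + 1)"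
      proof -
        obtain k where k: "j = Suc k" using j by (cases j) auto
        have u: "x + w \<noteq> 0" using xt' by auto
        show ?thesis using aux_div[OF u, of j "x + z" k] unfolding k by simp
      qed
      ultimately show ?thesis by simp
    qed
    hence "((\<lambda>x. p w * Wt s t w * ((x + z) ^ j / (x + w) ^ j)) has_field_derivative
           p w * Wt s t w * (j * (x + z) ^ (j - 1) * (w - z) / (x + w) ^ (j + 1))) (at x within {0<..})"
      by (rule DERIV_cmult)
    thus "((\<lambda>x. f x w) has_field_derivative fx x w) (at x within {0<..})"
      unfolding f_def fx_def by simp
  next
    fix x :: real assume "x \<in> {0<..}"
    hence "continuous_on {0..1} (f x)" unfolding f_def
      by (intro continuous_intros p Wt_cont) auto
    thus "f x integrable_on cbox 0 1" unfolding cbox_interval by (rule integrable_continuous_interval)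
  next
    have pc: "continuous_on ({0<..} \<times> {0..1}) (\<lambda>q. p (snd q))"
      by (rule continuous_on_compose2[OF p continuous_on_snd]) auto
    have wc: "continuous_on ({0<..} \<times> {0..1}) (\<lambda>q. Wt s t (snd q))"
      by (rule continuous_on_compose2[OF Wt_cont continuous_on_snd]) auto
    show "continuous_on ({0<..} \<times> cbox 0 1) (\<lambda>(x, t). fx x t)"
      unfolding fx_def cbox_interval case_prod_unfold
      by (intro continuous_intros pc wc) (auto simp: add_pos_nonneg)
  qed (use x in \<open>auto simp: convex_real_interval\<close>)
  moreover have "at x within {0<..} = at x" by (rule at_within_open) (use x in auto)
  ultimately have "((\<lambda>x. integral (cbox 0 1) (f x)) has_field_derivative integral (cbox 0 1) (fx x)) (at x)"
    by simp
  moreover have fe: "(\<lambda>x. (x + z) ^ j * Psi s t j p x) = (\<lambda>x. integral (cbox 0 1) (f x))"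
    by (rule ext) (rule eq1)
  ultimately show ?thesis by (simp only: fe eq2)
qed

lemma rolle_count:
  fixes f f' :: "real \<Rightarrow> real"
  assumes der: "\<And>x. 0 < x \<Longrightarrow> (f has_real_derivative f' x) (at x)"
  shows "finite S \<Longrightarrow> S \<subseteq> {x. 0 < x \<and> f x = 0} \<Longrightarrow> S \<noteq> {} \<Longrightarrow>
    \<exists>T. finite T \<and> T \<subseteq> {x. 0 < x \<and> f' x = 0} \<and> card T + 1 = card S \<and> (\<forall>t\<in>T. t < Max S)"
proof (induction "card S" arbitrary: S)
  case 0 thus ?case by simp
next
  case (Suc n S)
  define M where "M = Max S"
  have MS: "M \<in> S" unfolding M_def using Suc.prems by simp
  define S' where "S' = S - {M}"
  show ?case
  proof (cases "S' = {}")
    case True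
    hence "S = {M}" using MS unfolding S'_def by auto
    thus ?thesis by (intro exI[of _ "{}"]) auto
  next
    case False
    have cS': "card S' = n" using Suc.hyps(2) MS Suc.prems(1) unfolding S'_def by simp
    have fS': "finite S'" using Suc.prems(1) unfolding S'_def by simp
    obtain T' where T': "finite T'" "T' \<subseteq> {x. 0 < x \<and> f' x = 0}" "card T' + 1 = card S'"
        "\<forall>t\<in>T'. t < Max S'"
      using Suc.hyps(1)[OF cS'[symmetric] fS' _ False] Suc.prems(2) unfolding S'_def by blast
    define M' where "M' = Max S'"
    have M'S': "M' \<in> S'" unfolding M'_def using fS' False by simp
    hence M'M: "M' < M" unfolding S'_def M_def using Suc.prems(1)
      by (metis Diff_iff Max_ge insertCI less_le)
    have pos: "0 < M'" "0 < M" "f M' = 0" "f M = 0" using M'S' MS Suc.prems(2) unfolding S'_def by auto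
    have "\<exists>c. M' < c \<and> c < M \<and> (\<lambda>v. f' c * v) = (\<lambda>v. 0)"
    proof (rule Rolle_deriv[OF M'M])
      show "f M' = f M" using pos by simp
      have "\<forall>x\<in>{M'..M}. isCont f x"
      proof
        fix x assume "x \<in> {M'..M}"
        hence "0 < x" using pos by auto
        thus "isCont f x" using der[of x] by (rule_tac DERIV_isCont) auto
      qed
      thus "continuous_on {M'..M} f" by (rule continuous_at_imp_continuous_on)
      fix x assume "M' < x" "x < M"
      hence "0 < x" using pos by simp
      thus "(f has_derivative (\<lambda>v. f' x * v)) (at x)"
        using der[of x] by (simp add: has_field_derivative_def)
    qed
    then obtain c where c: "M' < c" "c < M" "f' c = 0" by (metis mult_cancel_left1)
    have cT': "c \<notin> T'" using T'(4) c(1) unfolding M'_def by auto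
    show ?thesis
    proof (intro exI[of _ "insert c T'"] conjI)
      show "finite (insert c T')" using T'(1) by simp
      show "insert c T' \<subseteq> {x. 0 < x \<and> f' x = 0}" using T'(2) c pos by auto
      show "card (insert c T') + 1 = card S"
        using T'(1,3) cT' Suc.hyps(2) cS' by simp
      show "\<forall>t\<in>insert c T'. t < Max S"
        using T'(4) c M'M unfolding M_def[symmetric] M'_def[symmetric] by auto
    qed
  qed
qed

lemma Psi_nz:
  assumes p: "continuous_on {0..1} p" and nn: "\<forall>y\<in>{0<..<1}. 0 \<le> p y"
    and fin: "finite {y\<in>{0<..<1}. p y = 0}" and x: "0 < x"
  shows "Psi s t j p x \<noteq> 0"
proof
  assume P0: "Psi s t j p x = 0"
  define h where "h y = p y * Wt s t y / (x + y) ^ j" for y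
  have hc: "continuous_on {0..1} h" unfolding h_def by (rule integrand_cont[OF p x])
  have "h integrable_on {0..1}" by (rule integrable_continuous_interval[OF hc])
  hence hi: "(h has_integral 0) (cbox 0 1)"
    using P0 unfolding Psi_def h_def[symmetric] cbox_interval by (metis has_integral_integral)
  have "infinite ({0<..<1::real} - {y\<in>{0<..<1}. p y = 0})"
    using fin by (intro Diff_infinite_finite) auto
  hence "({0<..<1::real} - {y\<in>{0<..<1}. p y = 0}) \<noteq> {}" by (metis finite.emptyI)
  then obtain y where y: "y \<in> {0<..<1}" "p y \<noteq> 0" by blast
  have "h y = 0"
  proof (rule has_integral_0_cbox_imp_0[OF _ _ hi])
    show "continuous_on (cbox 0 1) h" using hc by (simp add: cbox_interval)
    show "\<And>x. x \<in> box 0 1 \<Longrightarrow> 0 \<le> h x"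
      unfolding h_def using nn Wt_bounds x by (auto simp: box_real intro!: divide_nonneg_pos mult_nonneg_nonneg less_imp_le[of 0 "Wt s t _"])
    show "box 0 (1::real) \<noteq> {}" by (simp add: box_real)
    show "y \<in> cbox 0 1" using y by (simp add: cbox_interval)
  qed
  moreover have "0 < h y"
  proof -
    have "0 < p y" using nn y by force
    moreover have "0 < Wt s t y" using Wt_bounds y by auto
    moreover have "0 < (x + y) ^ j" using x y by simp
    ultimately show ?thesis unfolding h_def by simp
  qed
  ultimately show False by simp
qed

lemma descartes:
  "\<forall>j p. 1 \<le> j \<longrightarrow> continuous_on {0..1} p \<longrightarrow> finite {y\<in>{0<..<1}. p y = 0} \<longrightarrow>
     set_mset Z \<subseteq> {0<..<1} \<longrightarrow> (\<forall>y\<in>{0<..<1}. 0 \<le> p y * (\<Prod>z\<in>#Z. (y - z))) \<longrightarrow>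
     (\<forall>S. finite S \<longrightarrow> S \<subseteq> {x. 0 < x \<and> Psi s t j p x = 0} \<longrightarrow> card S \<le> size Z)"
proof (induction Z)
  case empty
  show ?case
  proof (intro allI impI)
    fix j :: nat and p :: "real \<Rightarrow> real" and S :: "real set"
    assume p: "continuous_on {0..1} p" and fin: "finite {y\<in>{0<..<1}. p y = 0}"
      and nn: "\<forall>y\<in>{0<..<1}. 0 \<le> p y * (\<Prod>z\<in>#{#}. (y - z))"
      and S: "S \<subseteq> {x. 0 < x \<and> Psi s t j p x = 0}"
    have "S = {}" using S Psi_nz[OF p _ fin] nn by auto
    thus "card S \<le> size {#}" by simp
  qed
next
  case (add z Z)
  show ?case
  proof (intro allI impI)
    fix j :: nat and p :: "real \<Rightarrow> real" and S :: "real set"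
    assume j: "1 \<le> j" and p: "continuous_on {0..1} p" and fin: "finite {y\<in>{0<..<1}. p y = 0}"
      and Z: "set_mset (add_mset z Z) \<subseteq> {0<..<1}"
      and nn: "\<forall>y\<in>{0<..<1}. 0 \<le> p y * (\<Prod>z\<in>#add_mset z Z. (y - z))"
      and Sf: "finite S" and S: "S \<subseteq> {x. 0 < x \<and> Psi s t j p x = 0}"
    show "card S \<le> size (add_mset z Z)"
    proof (cases "S = {}")
      case True thus ?thesis by simp
    next
      case False
      have z: "0 < z" "z < 1" using Z by auto
      define p' where "p' y = (y - z) * p y" for y
      have p': "continuous_on {0..1} p'" unfolding p'_def by (intro continuous_intros p)
      have fin': "finite {y\<in>{0<..<1}. p' y = 0}"
        by (rule finite_subset[of _ "insert z {y\<in>{0<..<1}. p y = 0}"]) (use fin in \<open>auto simp: p'_def\<close>)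
      have Z': "set_mset Z \<subseteq> {0<..<1}" using Z by auto
      have nn': "\<forall>y\<in>{0<..<1}. 0 \<le> p' y * (\<Prod>z\<in>#Z. (y - z))"
        using nn unfolding p'_def by (simp add: mult_ac)
      define g where "g x = (x + z) ^ j * Psi s t j p x" for x
      define g' where "g' x = j * (x + z) ^ (j - 1) * Psi s t (j + 1) p' x" for x
      have der: "\<And>x. 0 < x \<Longrightarrow> (g has_real_derivative g' x) (at x)"
        unfolding g_def g'_def p'_def using Dlem[OF p j z(1)] by blast
      have "S \<subseteq> {x. 0 < x \<and> g x = 0}" using S unfolding g_def by auto
      then obtain T where T: "finite T" "T \<subseteq> {x. 0 < x \<and> g' x = 0}" "card T + 1 = card S"
        using rolle_count[OF der Sf _ False] by blast
      have "T \<subseteq> {x. 0 < x \<and> Psi s t (j + 1) p' x = 0}"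
      proof
        fix x assume "x \<in> T"
        hence x: "0 < x" "g' x = 0" using T(2) by auto
        have xz: "x + z \<noteq> 0" using x z by simp
        have "real j * (x + z) ^ (j - 1) \<noteq> 0" using j xz by simp
        hence "Psi s t (j + 1) p' x = 0" using x(2) unfolding g'_def by (metis mult_eq_0_iff)
        thus "x \<in> {x. 0 < x \<and> Psi s t (j + 1) p' x = 0}" using x(1) by simp
      qed
      moreover have "1 \<le> j + 1" by simp
      ultimately have "card T \<le> size Z" using add.IH p' fin' Z' nn' T(1) by blast
      thus ?thesis using T(3) by simp
    qed
  qed
qed

lemma const_sign:
  fixes f :: "real \<Rightarrow> real"
  assumes c: "continuous_on {a<..<b} f" and nz: "\<forall>y\<in>{a<..<b}. f y \<noteq> 0"
  shows "(\<forall>y\<in>{a<..<b}. 0 < f y) \<or> (\<forall>y\<in>{a<..<b}. f y < 0)"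
proof (rule ccontr)
  assume "\<not> ?thesis"
  then obtain u v where u: "u \<in> {a<..<b}" "\<not> 0 < f u" and v: "v \<in> {a<..<b}" "\<not> f v < 0" by auto
  have fu: "f u < 0" using u nz by force
  have fv: "0 < f v" using v nz by force
  show False
  proof (cases "u \<le> v")
    case True
    have "continuous_on {u..v} f" by (rule continuous_on_subset[OF c]) (use u v in auto)
    then obtain x where "u \<le> x" "x \<le> v" "f x = 0" using IVT'[of f u 0 v] fu fv True by auto
    thus False using nz u v by force
  next
    case False
    have "continuous_on {v..u} f" by (rule continuous_on_subset[OF c]) (use u v in auto)
    then obtain x where "v \<le> x" "x \<le> u" "f x = 0" using IVT2'[of f u 0 v] fu fv False by auto
    thus False using nz u v by force
  qed
qed

lemma roots_mset:
  fixes g :: "real poly"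
  shows "g \<noteq> 0 \<Longrightarrow> \<exists>Z. set_mset Z \<subseteq> {0<..<1} \<and> size Z \<le> degree g \<and>
     ((\<forall>y\<in>{0<..<1}. 0 \<le> poly g y * (\<Prod>z\<in>#Z. (y - z))) \<or> (\<forall>y\<in>{0<..<1}. poly g y * (\<Prod>z\<in>#Z. (y - z)) \<le> 0))"
proof (induction "degree g" arbitrary: g rule: less_induct)
  case less
  show ?case
  proof (cases "\<exists>r\<in>{0<..<1}. poly g r = 0")
    case True
    then obtain r where r: "r \<in> {0<..<1}" "poly g r = 0" by blast
    then obtain h where h: "g = [:-r, 1:] * h" using poly_eq_0_iff_dvd by (metis dvdE)
    have h0: "h \<noteq> 0" using less.prems h by auto
    have "degree ([:-r, 1:] * h) = degree [:-r, 1:] + degree h" by (rule degree_mult_eq) (use h0 in auto)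
    hence dh: "degree g = degree h + 1" using h by simp
    obtain Z where Z: "set_mset Z \<subseteq> {0<..<1}" "size Z \<le> degree h"
      "(\<forall>y\<in>{0<..<1}. 0 \<le> poly h y * (\<Prod>z\<in>#Z. (y - z))) \<or> (\<forall>y\<in>{0<..<1}. poly h y * (\<Prod>z\<in>#Z. (y - z)) \<le> 0)"
      using less.hyps[of h] dh h0 by auto
    have eq: "poly g y * (\<Prod>z\<in>#add_mset r Z. (y - z)) = (y - r)^2 * (poly h y * (\<Prod>z\<in>#Z. (y - z)))" for y
    proof -
      have "poly g y = (y - r) * poly h y" unfolding h by (simp add: algebra_simps)
      thus ?thesis by (simp add: power2_eq_square mult_ac)
    qed
    show ?thesis
    proof (intro exI[of _ "add_mset r Z"] conjI)
      show "set_mset (add_mset r Z) \<subseteq> {0<..<1}" using Z r by auto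
      show "size (add_mset r Z) \<le> degree g" using Z dh by simp
      show "(\<forall>y\<in>{0<..<1}. 0 \<le> poly g y * (\<Prod>z\<in>#add_mset r Z. (y - z))) \<or>
            (\<forall>y\<in>{0<..<1}. poly g y * (\<Prod>z\<in>#add_mset r Z. (y - z)) \<le> 0)"
        unfolding eq using Z(3) by (auto intro: mult_nonneg_nonneg mult_nonneg_nonpos)
    qed
  next
    case False
    have "continuous_on {0<..<1} (poly g)" by (intro continuous_intros)
    from const_sign[OF this] False
    have "(\<forall>y\<in>{0<..<1}. 0 < poly g y) \<or> (\<forall>y\<in>{0<..<1}. poly g y < 0)" by auto
    thus ?thesis by (intro exI[of _ "{#}"]) (auto simp: less_imp_le)
  qed
qed

lemma sign_choose:
  fixes h :: "real \<Rightarrow> real"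
  assumes c: "continuous_on {0<..<1} h"
  shows "0 < b \<Longrightarrow> b \<le> 1 \<Longrightarrow> finite {y\<in>{0<..<b}. h y = 0} \<Longrightarrow>
    \<exists>Z. Z \<subseteq> {y\<in>{0<..<b}. h y = 0} \<and>
      ((\<forall>y\<in>{0<..<b}. 0 \<le> h y * (\<Prod>w\<in>Z. (y - w))) \<or> (\<forall>y\<in>{0<..<b}. h y * (\<Prod>w\<in>Z. (y - w)) \<le> 0))"
proof (induction "card {y\<in>{0<..<b}. h y = 0}" arbitrary: b)
  case 0
  hence e: "{y\<in>{0<..<b}. h y = 0} = {}" by simp
  have "continuous_on {0<..<b} h" by (rule continuous_on_subset[OF c]) (use 0 in auto)
  from const_sign[OF this] e
  have "(\<forall>y\<in>{0<..<b}. 0 < h y) \<or> (\<forall>y\<in>{0<..<b}. h y < 0)" by auto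
  thus ?case by (intro exI[of _ "{}"]) (auto simp: less_imp_le)
next
  case (Suc n b)
  define A where "A = {y\<in>{0<..<b}. h y = 0}"
  have Af: "finite A" and An: "card A = Suc n" using Suc.prems Suc.hyps(2) unfolding A_def by auto
  hence Ane: "A \<noteq> {}" by auto
  define M where "M = Max A"
  have MA: "M \<in> A" unfolding M_def using Af Ane by simp
  hence M: "0 < M" "M < b" "h M = 0" unfolding A_def by auto
  have Mmax: "y \<in> A \<Longrightarrow> y \<le> M" for y unfolding M_def using Af by simp
  have AM: "{y\<in>{0<..<M}. h y = 0} = A - {M}"
  proof (intro equalityI subsetI)
    fix y assume "y \<in> {y\<in>{0<..<M}. h y = 0}" thus "y \<in> A - {M}" using M unfolding A_def by auto
  next
    fix y assume y: "y \<in> A - {M}"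
    hence "y \<le> M" "y \<noteq> M" using Mmax by auto
    thus "y \<in> {y\<in>{0<..<M}. h y = 0}" using y unfolding A_def by auto
  qed
  have cM: "n = card {y\<in>{0<..<M}. h y = 0}" unfolding AM using An MA Af by simp
  obtain Z where Z: "Z \<subseteq> {y\<in>{0<..<M}. h y = 0}"
      "(\<forall>y\<in>{0<..<M}. 0 \<le> h y * (\<Prod>w\<in>Z. (y - w))) \<or> (\<forall>y\<in>{0<..<M}. h y * (\<Prod>w\<in>Z. (y - w)) \<le> 0)"
    using Suc.hyps(1)[OF cM M(1)] M Suc.prems(2) AM Af by auto
  have Zf: "finite Z" using Z(1) AM Af by (metis finite_Diff finite_subset)
  have ZM: "w \<in> Z \<Longrightarrow> w < M" for w using Z(1) by auto
  have MZ: "M \<notin> Z" using ZM by auto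
  have ZA: "Z \<subseteq> A" using Z(1) AM by auto
  define G where "G y = h y * (\<Prod>w\<in>Z. (y - w))" for y
  have Gc: "continuous_on {M<..<b} G" unfolding G_def
    by (intro continuous_intros continuous_on_subset[OF c]) (use M Suc.prems in auto)
  have Gnz: "\<forall>y\<in>{M<..<b}. G y \<noteq> 0"
  proof
    fix y assume y: "y \<in> {M<..<b}"
    have "h y \<noteq> 0"
    proof
      assume "h y = 0"
      hence "y \<in> A" using y M unfolding A_def by auto
      thus False using Mmax[of y] y by auto
    qed
    moreover have "(\<Prod>w\<in>Z. (y - w)) \<noteq> 0" using Zf ZM y by (force simp: prod_zero_iff)
    ultimately show "G y \<noteq> 0" unfolding G_def by simp
  qed
  from const_sign[OF Gc Gnz]
  have tau: "(\<forall>y\<in>{M<..<b}. 0 < G y) \<or> (\<forall>y\<in>{M<..<b}. G y < 0)" .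
  have Gins: "h y * (\<Prod>w\<in>insert M Z. (y - w)) = (y - M) * G y" for y
    unfolding G_def using Zf MZ by (simp add: mult_ac)
  have split: "y \<in> {0<..<b} \<Longrightarrow> y \<in> {0<..<M} \<or> y = M \<or> y \<in> {M<..<b}" for y by auto
  have GM: "G M = 0" unfolding G_def using M by simp
  have ZsA: "insert M Z \<subseteq> {y\<in>{0<..<b}. h y = 0}" using ZA MA unfolding A_def by auto
  have ZsA': "Z \<subseteq> {y\<in>{0<..<b}. h y = 0}" using ZA unfolding A_def by auto
  from Z(2) tau show ?case
  proof (elim disjE)
    assume s1: "\<forall>y\<in>{0<..<M}. 0 \<le> h y * (\<Prod>w\<in>Z. (y - w))" and t1: "\<forall>y\<in>{M<..<b}. 0 < G y"
    have "\<forall>y\<in>{0<..<b}. 0 \<le> G y"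
    proof
      fix y assume y: "y \<in> {0<..<b}"
      from split[OF y] show "0 \<le> G y"
      proof (elim disjE)
        assume "y \<in> {0<..<M}" thus ?thesis using s1 unfolding G_def by auto
      next
        assume "y = M" thus ?thesis using GM by simp
      next
        assume "y \<in> {M<..<b}" thus ?thesis using t1 by (auto intro: less_imp_le)
      qed
    qed
    thus ?thesis using ZsA' unfolding G_def by blast
  next
    assume s1: "\<forall>y\<in>{0<..<M}. h y * (\<Prod>w\<in>Z. (y - w)) \<le> 0" and t1: "\<forall>y\<in>{M<..<b}. G y < 0"
    have "\<forall>y\<in>{0<..<b}. G y \<le> 0"
    proof
      fix y assume y: "y \<in> {0<..<b}"
      from split[OF y] show "G y \<le> 0"
      proof (elim disjE)
        assume "y \<in> {0<..<M}" thus ?thesis using s1 unfolding G_def by auto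
      next
        assume "y = M" thus ?thesis using GM by simp
      next
        assume "y \<in> {M<..<b}" thus ?thesis using t1 by (auto intro: less_imp_le)
      qed
    qed
    thus ?thesis using ZsA' unfolding G_def by blast
  next
    assume s1: "\<forall>y\<in>{0<..<M}. 0 \<le> h y * (\<Prod>w\<in>Z. (y - w))" and t1: "\<forall>y\<in>{M<..<b}. G y < 0"
    have "\<forall>y\<in>{0<..<b}. (y - M) * G y \<le> 0"
    proof
      fix y assume y: "y \<in> {0<..<b}"
      from split[OF y] show "(y - M) * G y \<le> 0"
      proof (elim disjE)
        assume y: "y \<in> {0<..<M}"
        hence "y - M \<le> 0" "0 \<le> G y" using s1 unfolding G_def by auto
        thus ?thesis by (rule mult_nonpos_nonneg)
      next
        assume "y = M" thus ?thesis by simp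
      next
        assume y: "y \<in> {M<..<b}"
        hence "0 < y - M" "G y < 0" using t1 by auto
        hence "(y - M) * G y < 0" by (rule mult_pos_neg)
        thus ?thesis by (rule less_imp_le)
      qed
    qed
    hence "\<forall>y\<in>{0<..<b}. h y * (\<Prod>w\<in>insert M Z. (y - w)) \<le> 0" by (simp only: Gins)
    thus ?thesis using ZsA by (intro exI[of _ "insert M Z"]) simp
  next
    assume s1: "\<forall>y\<in>{0<..<M}. h y * (\<Prod>w\<in>Z. (y - w)) \<le> 0" and t1: "\<forall>y\<in>{M<..<b}. 0 < G y"
    have "\<forall>y\<in>{0<..<b}. 0 \<le> (y - M) * G y"
    proof
      fix y assume y: "y \<in> {0<..<b}"
      from split[OF y] show "0 \<le> (y - M) * G y"
      proof (elim disjE)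
        assume y: "y \<in> {0<..<M}"
        hence "y - M \<le> 0" "G y \<le> 0" using s1 unfolding G_def by auto
        thus ?thesis by (rule mult_nonpos_nonpos)
      next
        assume "y = M" thus ?thesis by simp
      next
        assume y: "y \<in> {M<..<b}"
        hence "0 < y - M" "0 < G y" using t1 by auto
        hence "0 < (y - M) * G y" by (rule mult_pos_pos)
        thus ?thesis by (rule less_imp_le)
      qed
    qed
    hence "\<forall>y\<in>{0<..<b}. 0 \<le> h y * (\<Prod>w\<in>insert M Z. (y - w))" by (simp only: Gins)
    thus ?thesis using ZsA by (intro exI[of _ "insert M Z"]) simp
  qed
qed

lemma Psi_cont:
  assumes p: "continuous_on {0..1} p" and x: "0 < x"
  shows "isCont (Psi s t 1 p) x"
proof -
  have "isCont (\<lambda>x. (x + 1) ^ 1 * Psi s t 1 p x) x"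
    by (rule DERIV_isCont[OF Dlem[OF p _ _ x]]) auto
  hence c1: "isCont (\<lambda>x. (x + 1) * Psi s t 1 p x) x" by simp
  have c2: "isCont (\<lambda>x. ((x + 1) * Psi s t 1 p x) / (x + 1)) x"
    using x by (intro continuous_intros c1) auto
  have "eventually (\<lambda>y. ((y + 1) * Psi s t 1 p y) / (y + 1) = Psi s t 1 p y) (nhds x)"
  proof -
    have "eventually (\<lambda>y. y \<in> {0<..}) (nhds x)" using x by (intro eventually_nhds_in_open) auto
    thus ?thesis by eventually_elim auto
  qed
  from isCont_cong[OF this] c2 show ?thesis by simp
qed

lemma int_nonzero:
  fixes k :: "real \<Rightarrow> real"
  assumes int: "set_integrable lborel {0<..<1} k" and nn: "\<forall>x\<in>{0<..<1}. 0 \<le> k x"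
    and F: "finite F" and nz: "\<forall>x\<in>{0<..<1}. x \<notin> F \<longrightarrow> k x \<noteq> 0"
  shows "(LINT x:{0<..<1}|lborel. k x) \<noteq> 0"
proof
  assume I0: "(LINT x:{0<..<1}|lborel. k x) = 0"
  define f where "f x = indicator {0<..<1} x * k x" for x
  have fi: "integrable lborel f" using int unfolding set_integrable_def f_def by simp
  have "AE x in lborel. 0 \<le> f x" unfolding f_def using nn by (intro AE_I2) (auto simp: indicator_def)
  moreover have "integral\<^sup>L lborel f = 0" using I0 unfolding set_lebesgue_integral_def f_def by simp
  ultimately have ae: "AE x in lborel. f x = 0" using integral_nonneg_eq_0_iff_AE[OF fi] by simp
  have aeF: "AE x in lborel. x \<notin> F" by (rule AE_not_in[OF finite_imp_null_set_lborel[OF F]])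
  have "AE x in lborel. x \<notin> {0<..<1::real}"
    using ae aeF by eventually_elim (use nz in \<open>auto simp: f_def\<close>)
  hence "{0<..<1::real} \<in> null_sets lborel" by (subst AE_iff_null_sets) auto
  hence "emeasure lborel {0<..<1::real} = 0" by (simp add: null_sets_def)
  thus False by simp
qed

lemma key_lemma:
  fixes v :: "nat \<Rightarrow> real"
  assumes hyp: "\<forall>i<N. (\<Sum>j<N. v j * mom s t (i+a) (j+e)) = 0" and j0: "j0 < N"
  shows "v j0 = 0"
proof (rule ccontr)
  assume v0: "v j0 \<noteq> 0"
  define g :: "real poly" where "g = (\<Sum>j<N. monom (v j) j)"
  have pg: "poly g y = (\<Sum>j<N. v j * y ^ j)" for y unfolding g_def by (simp add: poly_sum poly_monom)
  have "coeff g j0 = v j0" unfolding g_def coeff_sum using j0 by (simp add: coeff_monom)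
  hence g0: "g \<noteq> 0" using v0 by auto
  have dg: "degree g < N"
  proof -
    have "degree g \<le> N - 1" unfolding g_def
      by (rule degree_sum_le) (auto intro: order.trans[OF degree_monom_le])
    thus ?thesis using j0 by linarith
  qed
  define p where "p = (\<lambda>y::real. \<Sum>j<N. v j * y ^ (j + e))"
  have pp: "p y = y ^ e * poly g y" for y
    unfolding p_def pg by (simp add: sum_distrib_left power_add mult_ac)
  have pc: "continuous_on {0..1} p" unfolding p_def by (intro continuous_intros)
  obtain Z where Z: "set_mset Z \<subseteq> {0<..<1}" "size Z \<le> degree g"
    "(\<forall>y\<in>{0<..<1}. 0 \<le> poly g y * (\<Prod>z\<in>#Z. (y - z))) \<or> (\<forall>y\<in>{0<..<1}. poly g y * (\<Prod>z\<in>#Z. (y - z)) \<le> 0)"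
    using roots_mset[OF g0] by blast
  obtain c :: real where c: "c = 1 \<or> c = -1" "\<forall>y\<in>{0<..<1}. 0 \<le> (c * p y) * (\<Prod>z\<in>#Z. (y - z))"
  proof (cases "\<forall>y\<in>{0<..<1}. 0 \<le> poly g y * (\<Prod>z\<in>#Z. (y - z))")
    case True
    have "\<forall>y\<in>{0<..<1}. 0 \<le> (1 * p y) * (\<Prod>z\<in>#Z. (y - z))"
    proof
      fix y :: real assume y: "y \<in> {0<..<1}"
      have eq: "(1 * p y) * (\<Prod>z\<in>#Z. (y - z)) = y ^ e * (poly g y * (\<Prod>z\<in>#Z. (y - z)))" by (simp add: pp mult.assoc)
      show "0 \<le> (1 * p y) * (\<Prod>z\<in>#Z. (y - z))" unfolding eq using True y by simp
    qed
    thus ?thesis using that by blast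
  next
    case False
    hence F: "\<forall>y\<in>{0<..<1}. poly g y * (\<Prod>z\<in>#Z. (y - z)) \<le> 0" using Z(3) by blast
    have "\<forall>y\<in>{0<..<1}. 0 \<le> (-1 * p y) * (\<Prod>z\<in>#Z. (y - z))"
    proof
      fix y :: real assume y: "y \<in> {0<..<1}"
      have eq: "(-1 * p y) * (\<Prod>z\<in>#Z. (y - z)) = y ^ e * (- (poly g y * (\<Prod>z\<in>#Z. (y - z))))" by (simp add: pp mult.assoc)
      have "0 \<le> - (poly g y * (\<Prod>z\<in>#Z. (y - z)))" using F y by auto
      moreover have "0 \<le> y ^ e" using y by simp
      ultimately show "0 \<le> (-1 * p y) * (\<Prod>z\<in>#Z. (y - z))" unfolding eq by (rule mult_nonneg_nonneg[rotated])
    qed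
    thus ?thesis using that by blast
  qed
  have c0: "c \<noteq> 0" using c(1) by auto
  have cpc: "continuous_on {0..1} (\<lambda>y. c * p y)" by (intro continuous_intros pc)
  have fin: "finite {y\<in>{0<..<1}. c * p y = 0}"
  proof (rule finite_subset[OF _ poly_roots_finite[OF g0]])
    show "{y\<in>{0<..<1}. c * p y = 0} \<subseteq> {x. poly g x = 0}" using c0 by (auto simp: pp)
  qed
  have desc: "\<And>S. finite S \<Longrightarrow> S \<subseteq> {x. 0 < x \<and> Psi s t 1 (\<lambda>y. c * p y) x = 0} \<Longrightarrow> card S \<le> size Z"
    using descartes[of Z s t] cpc fin Z(1) c(2) by auto
  have Psic: "Psi s t 1 (\<lambda>y. c * p y) x = c * Psi s t 1 p x" for x
    unfolding Psi_def int_cmul[symmetric] by (simp add: mult_ac)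
  define Fz where "Fz = {x\<in>{0<..<1}. PhiL s t p x = 0}"
  have FzS: "Fz \<subseteq> {x. 0 < x \<and> Psi s t 1 (\<lambda>y. c * p y) x = 0}"
    unfolding Fz_def using PhiL_Psi[OF pc] by (auto simp: Psic[unfolded One_nat_def])
  have Fzf: "finite Fz"
  proof (rule ccontr)
    assume "infinite Fz"
    then obtain S where S: "finite S" "card S = size Z + 1" "S \<subseteq> Fz"
      using infinite_arbitrarily_large by blast
    thus False using desc[of S] FzS by auto
  qed
  have cFz: "card Fz < N" using desc[OF Fzf FzS] Z(2) dg by linarith
  have hc: "continuous_on {0<..<1} (PhiL s t p)"
  proof -
    have "continuous_on {0<..<1} (Psi s t 1 p)"
      by (intro continuous_at_imp_continuous_on ballI Psi_cont[OF pc]) auto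
    thus ?thesis by (rule continuous_on_eq) (auto simp: PhiL_Psi[OF pc])
  qed
  obtain Z' where Z': "Z' \<subseteq> Fz"
    "(\<forall>y\<in>{0<..<1}. 0 \<le> PhiL s t p y * (\<Prod>w\<in>Z'. (y - w))) \<or> (\<forall>y\<in>{0<..<1}. PhiL s t p y * (\<Prod>w\<in>Z'. (y - w)) \<le> 0)"
    using sign_choose[OF hc, of 1] Fzf unfolding Fz_def by auto
  have Z'f: "finite Z'" using Z'(1) Fzf by (rule finite_subset)
  define q :: "real poly" where "q = (\<Prod>w\<in>Z'. [:-w, 1:])"
  have pq: "poly q y = (\<Prod>w\<in>Z'. (y - w))" for y unfolding q_def by (simp add: poly_prod)
  have dq: "degree q < N"
  proof -
    have "degree q \<le> sum (degree \<circ> (\<lambda>w. [:-w, 1:])) Z'" unfolding q_def by (rule degree_prod_sum_le[OF Z'f])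
    also have "\<dots> = card Z'" by simp
    also have "\<dots> \<le> card Fz" using Z'(1) Fzf by (rule card_mono[rotated])
    finally show ?thesis using cFz by linarith
  qed
  define k where "k x = poly q x * (x ^ a * Wt s t x * PhiL s t p x)" for x
  have kexp: "k x = (\<Sum>i\<le>degree q. coeff q i * (x ^ (i + a) * Wt s t x * PhiL s t p x))" for x
    unfolding k_def poly_altdef sum_distrib_right by (intro sum.cong refl) (simp add: power_add mult_ac)
  have fubi: "set_integrable lborel {0<..<1} (\<lambda>x. x ^ (i + a) * Wt s t x * PhiL s t p x)" for i
    unfolding p_def by (rule fub(2)[where v=v and N=N and e=e and s=s and t=t and i=i and a=a])
  have fube: "i < N \<Longrightarrow> (LINT x:{0<..<1}|lborel. x ^ (i + a) * Wt s t x * PhiL s t p x) = 0" for i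
    using fub(1)[where v=v and N=N and e=e and s=s and t=t and i=i and a=a] hyp unfolding p_def by simp
  have kint: "set_integrable lborel {0<..<1} k"
  proof -
    have "integrable lborel (\<lambda>x. \<Sum>i\<le>degree q. coeff q i * (indicator {0<..<1} x * (x ^ (i + a) * Wt s t x * PhiL s t p x)))"
      using fubi unfolding set_integrable_def
      by (intro Bochner_Integration.integrable_sum integrable_mult_right) simp
    thus ?thesis unfolding set_integrable_def kexp by (simp add: sum_distrib_left mult_ac)
  qed
  have kzero: "(LINT x:{0<..<1}|lborel. k x) = 0"
  proof -
    have "(LINT x:{0<..<1}|lborel. k x) = (\<integral>x. (\<Sum>i\<le>degree q. coeff q i * (indicator {0<..<1} x * (x ^ (i + a) * Wt s t x * PhiL s t p x))) \<partial>lborel)"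
      unfolding set_lebesgue_integral_def kexp by (simp add: sum_distrib_left mult_ac)
    also have "\<dots> = (\<Sum>i\<le>degree q. coeff q i * (LINT x:{0<..<1}|lborel. x ^ (i + a) * Wt s t x * PhiL s t p x))"
      using fubi unfolding set_integrable_def set_lebesgue_integral_def
      by (subst Bochner_Integration.integral_sum) (auto intro: integrable_mult_right)
    also have "\<dots> = 0" using fube dq by (intro sum.neutral) auto
    finally show ?thesis .
  qed
  have knz: "\<forall>x\<in>{0<..<1}. x \<notin> Fz \<longrightarrow> k x \<noteq> 0"
  proof (intro ballI impI)
    fix x :: real assume x: "x \<in> {0<..<1}" "x \<notin> Fz"
    have "PhiL s t p x \<noteq> 0" using x unfolding Fz_def by auto
    moreover have "poly q x \<noteq> 0" using x Z'(1) Z'f unfolding pq by (auto simp: prod_zero_iff)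
    moreover have "x ^ a * Wt s t x \<noteq> 0" using x Wt_bounds[of x s t] by auto
    ultimately show "k x \<noteq> 0" unfolding k_def by simp
  qed
  have pos: "0 < x ^ a * Wt s t x" if "x \<in> {0<..<1}" for x using that Wt_bounds[of x s t] by auto
  from Z'(2) show False
  proof
    assume A: "\<forall>y\<in>{0<..<1}. 0 \<le> PhiL s t p y * (\<Prod>w\<in>Z'. (y - w))"
    have "\<forall>x\<in>{0<..<1}. 0 \<le> k x"
    proof
      fix x :: real assume x: "x \<in> {0<..<1}"
      have "k x = (x ^ a * Wt s t x) * (PhiL s t p x * (\<Prod>w\<in>Z'. (x - w)))" unfolding k_def pq by (simp add: mult_ac)
      thus "0 \<le> k x" using A x pos[OF x] by simp
    qed
    from int_nonzero[OF kint this Fzf knz] kzero show False by simp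
  next
    assume A: "\<forall>y\<in>{0<..<1}. PhiL s t p y * (\<Prod>w\<in>Z'. (y - w)) \<le> 0"
    have "\<forall>x\<in>{0<..<1}. 0 \<le> - k x"
    proof
      fix x :: real assume x: "x \<in> {0<..<1}"
      have kx: "k x = (x ^ a * Wt s t x) * (PhiL s t p x * (\<Prod>w\<in>Z'. (x - w)))" unfolding k_def pq by (simp add: mult_ac)
      have n1: "PhiL s t p x * (\<Prod>w\<in>Z'. (x - w)) \<le> 0" using A x by auto
      have p0: "0 \<le> x ^ a * Wt s t x" using pos[OF x] by simp
      have "(x ^ a * Wt s t x) * (PhiL s t p x * (\<Prod>w\<in>Z'. (x - w))) \<le> 0"
        by (rule mult_nonneg_nonpos[OF p0 n1])
      thus "0 \<le> - k x" unfolding kx by simp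
    qed
    moreover have "set_integrable lborel {0<..<1} (\<lambda>x. - k x)"
      using kint unfolding set_integrable_def by simp
    moreover have "\<forall>x\<in>{0<..<1}. x \<notin> Fz \<longrightarrow> - k x \<noteq> 0" using knz by simp
    ultimately have "(LINT x:{0<..<1}|lborel. - k x) \<noteq> 0" using int_nonzero Fzf by blast
    thus False using kzero by (simp add: set_lebesgue_integral_def)
  qed
qed

definition Mx :: "(nat \<Rightarrow> nat \<Rightarrow> real) \<Rightarrow> nat \<Rightarrow> (nat \<Rightarrow> real) \<Rightarrow> real mat" where
  "Mx a N b = Matrix.mat (N+1) (N+1) (\<lambda>(i,j). if j < N then a i j else b i)"

definition cof :: "(nat \<Rightarrow> nat \<Rightarrow> real) \<Rightarrow> nat \<Rightarrow> nat \<Rightarrow> real" where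
  "cof a N i = cofactor (Mx a N (\<lambda>_. 0)) i N"

lemma Mx_carrier: "Mx a N b \<in> carrier_mat (N+1) (N+1)"
  unfolding Mx_def by auto

lemma mat_delete_Mx: "i < N+1 \<Longrightarrow> mat_delete (Mx a N b) i N = mat_delete (Mx a N c) i N"
  unfolding mat_delete_def Mx_def by (intro eq_matI) auto

lemma det_Mx: "Determinant.det (Mx a N b) = (\<Sum>i<N+1. b i * cof a N i)"
proof -
  have "Determinant.det (Mx a N b) = (\<Sum>i<N+1. Mx a N b $$ (i,N) * cofactor (Mx a N b) i N)"
    by (rule laplace_expansion_column[OF Mx_carrier]) auto
  also have "\<dots> = (\<Sum>i<N+1. b i * cof a N i)"
  proof (intro sum.cong refl)
    fix i assume i: "i \<in> {..<N+1}"
    have "Mx a N b $$ (i,N) = b i" using i by (simp add: Mx_def)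
    moreover have "cofactor (Mx a N b) i N = cof a N i"
      unfolding cof_def cofactor_def using mat_delete_Mx[of i N a b "\<lambda>_. 0"] i by simp
    ultimately show "Mx a N b $$ (i,N) * cofactor (Mx a N b) i N = b i * cof a N i" by simp
  qed
  finally show ?thesis .
qed

lemma cof_last: "cof a N N = Determinant.det (Matrix.mat N N (\<lambda>(i,j). a i j))"
proof -
  have "mat_delete (Mx a N (\<lambda>_. 0)) N N = Matrix.mat N N (\<lambda>(i,j). a i j)"
    unfolding mat_delete_def Mx_def by (intro eq_matI) auto
  thus ?thesis unfolding cof_def cofactor_def by simp
qed

lemma cof_first: "cof a N 0 = (-1)^N * Determinant.det (Matrix.mat N N (\<lambda>(i,j). a (i+1) j))"
proof -
  have "mat_delete (Mx a N (\<lambda>_. 0)) 0 N = Matrix.mat N N (\<lambda>(i,j). a (i+1) j)"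
    unfolding mat_delete_def Mx_def by (intro eq_matI) auto
  thus ?thesis unfolding cof_def cofactor_def by simp
qed

lemma orth_Mx: assumes "k < N" shows "(\<Sum>i<N+1. a i k * cof a N i) = 0"
proof -
  have "Determinant.det (Mx a N (\<lambda>i. a i k)) = 0"
    by (rule det_identical_columns[OF Mx_carrier, of k N]) (use assms in \<open>auto simp: Mx_def\<close>)
  thus ?thesis by (simp add: det_Mx)
qed

lemma key: "(\<forall>i<N. (\<Sum>j<N. v j * mom s t (i+a) (j+e)) = 0) \<Longrightarrow> j < N \<Longrightarrow> v j = 0"
  by (rule key_lemma)

lemma mom_shift: "mom (s+1) t i j = mom s t (i+1) (j+1)"
  unfolding mom_def by (simp add: add.commute add.left_commute)
lemma mom_shift': "mom (Suc s) t i j = mom s t (Suc i) (Suc j)"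
  using mom_shift[of s t i j] by simp
lemma mom_shift_fun: "mom (Suc s) t = (\<lambda>i j. mom s t (Suc i) (Suc j))"
  by (simp add: fun_eq_iff mom_shift')

lemma det_nz:
  assumes "\<And>i j. A i j = mom s t (i+a) (j+e)"
  shows "Determinant.det (Matrix.mat N N (\<lambda>(i,j). A i j)) \<noteq> 0"
proof
  let ?M = "Matrix.mat N N (\<lambda>(i,j). A i j)"
  assume "Determinant.det ?M = 0"
  then obtain v where v: "v \<in> carrier_vec N" "v \<noteq> 0\<^sub>v N" "?M *\<^sub>v v = 0\<^sub>v N"
    using det_0_iff_vec_prod_zero_field[of ?M N] by auto
  have "\<forall>i<N. (\<Sum>j<N. vec_index v j * mom s t (i+a) (j+e)) = 0"
  proof (intro allI impI)
    fix i assume i: "i < N"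
    have "vec_index (?M *\<^sub>v v) i = 0" using v(3) i by simp
    hence "(\<Sum>j\<in>{0..<N}. A i j * vec_index v j) = 0"
      using i v(1) by (simp add: scalar_prod_def)
    thus "(\<Sum>j<N. vec_index v j * mom s t (i+a) (j+e)) = 0"
      by (simp add: assms lessThan_atLeast0 mult.commute)
  qed
  hence "\<And>j. j < N \<Longrightarrow> vec_index v j = 0" using key[of N "\<lambda>j. vec_index v j" s t a e] by blast
  hence "v = 0\<^sub>v N" using v(1) by (intro eq_vecI) auto
  with v(2) show False by simp
qed

lemma tau_nz: "tau s t N \<noteq> 0"
  unfolding tau_def by (rule det_nz[of _ s t 0 0]) simp

lemma xi_nz: "xi s t N \<noteq> 0"
  unfolding xi_def by (rule det_nz[of _ s t 0 1]) simp

lemma Pcj_Mx: "Pcj s t N x = Determinant.det (Mx (mom s t) N (\<lambda>i. x^i)) / tau s t N"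
  by (simp add: Pcj_def Mx_def)
lemma Qcj_Mx: "Qcj s t N x = Determinant.det (Mx (\<lambda>i j. mom s t i (j+1)) N (\<lambda>i. x^i)) / xi s t N"
  unfolding Qcj_def Mx_def by (rule refl)

lemma det_shift_transpose: "Determinant.det (Matrix.mat N N (\<lambda>(i,j). mom s t (i+1) j)) = xi s t N"
proof -
  have "Matrix.mat N N (\<lambda>(i,j). mom s t (i+1) j) = transpose_mat (Matrix.mat N N (\<lambda>(i,j). mom s t i (j+1)))"
    by (intro eq_matI) (auto simp: mom_sym)
  moreover have "Determinant.det (transpose_mat (Matrix.mat N N (\<lambda>(i,j). mom s t i (j+1))))
     = Determinant.det (Matrix.mat N N (\<lambda>(i,j). mom s t i (j+1)))"
    by (rule det_transpose) auto
  ultimately show ?thesis unfolding xi_def by simp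
qed

lemma shift2: "(\<Sum>i<n+2. (f::nat\<Rightarrow>real) i) = f 0 + (\<Sum>i<n+1. f (Suc i))"
  using sum.lessThan_Suc_shift[of f "n+1"] by (simp add: numeral_2_eq_2)

theorem proposition2p5:
  fixes s t n :: nat and x :: real
  assumes "x \<noteq> 0"
  shows "Pcj (s + 1) t n x
    = (1 / x) * (Pcj s t (n + 1) x
        + (xi s t n * xi s t (n + 1)) / (tau (s + 1) t n * tau s t (n + 1)) * Qcj s t n x)"
proof -
  define A where "A = tau s t (n+1)"
  define B where "B = tau (s+1) t n"
  define X0 where "X0 = xi s t n"
  define X1 where "X1 = xi s t (n+1)"
  define \<alpha> where "\<alpha> i = cof (mom s t) (n+1) i" for i
  define \<beta> where "\<beta> i = cof (mom (s+1) t) n i" for i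
  define \<gamma> where "\<gamma> i = cof (\<lambda>i j. mom s t i (j+1)) n i" for i
  have A0: "A \<noteq> 0" unfolding A_def by (rule tau_nz)
  have B0: "B \<noteq> 0" unfolding B_def by (rule tau_nz)
  have X00: "X0 \<noteq> 0" unfolding X0_def by (rule xi_nz)
  have al: "\<alpha> (n+1) = A" unfolding \<alpha>_def A_def tau_def using cof_last[of "mom s t" "n+1"] by simp
  have af: "\<alpha> 0 = (-1)^(n+1) * X1"
    unfolding \<alpha>_def X1_def using cof_first[of "mom s t" "n+1"] det_shift_transpose[of "n+1" s t] by simp
  have bl: "\<beta> n = B" unfolding \<beta>_def B_def tau_def using cof_last[of "mom (s+1) t" n] by simp
  have gl: "\<gamma> n = X0" unfolding \<gamma>_def X0_def xi_def using cof_last[of "\<lambda>i j. mom s t i (j+1)" n] by simp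
  have gf: "\<gamma> 0 = (-1)^n * B"
    unfolding \<gamma>_def B_def tau_def using cof_first[of "\<lambda>i j. mom s t i (j+1)" n] by (simp add: mom_shift_fun)
  have oa: "k < n+1 \<Longrightarrow> (\<Sum>i<n+2. mom s t i k * \<alpha> i) = 0" for k
    unfolding \<alpha>_def using orth_Mx[of k "n+1" "mom s t"] by simp
  have ob: "k < n \<Longrightarrow> (\<Sum>i<n+1. mom s t (i+1) (k+1) * \<beta> i) = 0" for k
    unfolding \<beta>_def using orth_Mx[of k n "mom (s+1) t"] by (simp add: mom_shift')
  have og: "k < n \<Longrightarrow> (\<Sum>i<n+1. mom s t i (k+1) * \<gamma> i) = 0" for k
    unfolding \<gamma>_def using orth_Mx[of k n "\<lambda>i j. mom s t i (j+1)"] by simp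
  define r where "r i = (if i = 0 then 0 else A * \<beta> (i-1)) - B * \<alpha> i" for i
  have rl: "r (n+1) = 0" unfolding r_def using al bl by simp
  have R1: "(\<Sum>i<n+1. mom s t i (k+1) * r i) = 0" if k: "k < n" for k
  proof -
    have "(\<Sum>i<n+1. mom s t i (k+1) * r i) = (\<Sum>i<n+2. mom s t i (k+1) * r i)"
      using rl by simp
    also have "\<dots>
       = A * (\<Sum>i<n+1. mom s t (i+1) (k+1) * \<beta> i) - B * (\<Sum>i<n+2. mom s t i (k+1) * \<alpha> i)"
    proof -
      have "(\<Sum>i<n+2. mom s t i (k+1) * r i) = (\<Sum>i<n+2. mom s t i (k+1) * (if i = 0 then 0 else A * \<beta> (i-1)))
          - B * (\<Sum>i<n+2. mom s t i (k+1) * \<alpha> i)"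
        unfolding r_def by (simp add: algebra_simps sum_subtractf sum_distrib_left)
      also have "(\<Sum>i<n+2. mom s t i (k+1) * (if i = 0 then 0 else A * \<beta> (i-1)))
          = A * (\<Sum>i<n+1. mom s t (i+1) (k+1) * \<beta> i)"
        by (simp only: shift2) (simp add: sum_distrib_left algebra_simps)
      finally show ?thesis .
    qed
    also have "\<dots> = 0" using ob[OF k] oa[of "k+1"] k by simp
    finally show ?thesis .
  qed
  define w where "w i = X0 * r i - r n * \<gamma> i" for i
  have wn: "w n = 0" unfolding w_def gl by simp
  have "\<forall>k<n. (\<Sum>i<n. w i * mom s t (k+1) (i+0)) = 0"
  proof (intro allI impI)
    fix k assume k: "k < n"
    have "(\<Sum>i<n. w i * mom s t (k+1) (i+0)) = (\<Sum>i<n+1. mom s t i (k+1) * w i)"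
      using wn by (simp add: mom_sym[of s t "Suc k"] mult.commute)
    also have "\<dots> = X0 * (\<Sum>i<n+1. mom s t i (k+1) * r i) - r n * (\<Sum>i<n+1. mom s t i (k+1) * \<gamma> i)"
      unfolding w_def by (simp add: algebra_simps sum_subtractf sum_distrib_left)
    also have "\<dots> = 0" using R1[OF k] og[OF k] by simp
    finally show "(\<Sum>i<n. w i * mom s t (k+1) (i+0)) = 0" .
  qed
  hence w0: "i < n \<Longrightarrow> w i = 0" for i using key[of n w s t 1 0 i] by blast
  have wall: "X0 * r i = r n * \<gamma> i" if i: "i < n+1" for i
  proof (cases "i < n")
    case True thus ?thesis using w0[of i] unfolding w_def by simp
  next
    case False with i have "i = n" by simp
    thus ?thesis using gl by simp
  qed
  have "X0 * r 0 = r n * \<gamma> 0" using wall[of 0] by simp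
  hence "X0 * (- B * ((-1)^(n+1) * X1)) = r n * ((-1)^n * B)" unfolding gf using af by (simp add: r_def)
  hence "((-1)^n * B) * (X0 * X1) = ((-1)^n * B) * r n" by (simp add: algebra_simps)
  hence rn: "r n = X0 * X1" using B0 by simp
  have rg: "i < n+1 \<Longrightarrow> r i = X1 * \<gamma> i" for i
    using wall[of i] X00 unfolding rn by (simp add: algebra_simps)
  define D1 where "D1 = (\<Sum>i<n+2. x^i * \<alpha> i)"
  define D' where "D' = (\<Sum>i<n+1. x^i * \<beta> i)"
  define DQ where "DQ = (\<Sum>i<n+1. x^i * \<gamma> i)"
  have P1: "Pcj s t (n+1) x = D1 / A" unfolding Pcj_Mx det_Mx D1_def A_def \<alpha>_def by simp
  have P2: "Pcj (s+1) t n x = D' / B" unfolding Pcj_Mx det_Mx D'_def B_def \<beta>_def by simp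
  have P3: "Qcj s t n x = DQ / X0" unfolding Qcj_Mx det_Mx DQ_def X0_def \<gamma>_def by simp
  have "(\<Sum>i<n+2. x^i * r i) = A * x * D' - B * D1"
  proof -
    have "(\<Sum>i<n+2. x^i * r i) = (\<Sum>i<n+2. x^i * (if i = 0 then 0 else A * \<beta> (i-1))) - B * D1"
      unfolding r_def D1_def by (simp add: algebra_simps sum_subtractf sum_distrib_left)
    also have "(\<Sum>i<n+2. x^i * (if i = 0 then 0 else A * \<beta> (i-1))) = A * x * D'"
      unfolding D'_def
      by (simp only: shift2) (simp add: sum_distrib_left algebra_simps)
    finally show ?thesis .
  qed
  moreover have "(\<Sum>i<n+2. x^i * r i) = X1 * DQ"
  proof -
    have "(\<Sum>i<n+2. x^i * r i) = (\<Sum>i<n+1. x^i * r i)" using rl by simp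
    also have "\<dots> = (\<Sum>i<n+1. x^i * (X1 * \<gamma> i))" by (intro sum.cong refl) (simp add: rg)
    also have "\<dots> = X1 * DQ" unfolding DQ_def by (simp add: sum_distrib_left algebra_simps)
    finally show ?thesis .
  qed
  ultimately have key_eq: "A * x * D' = B * D1 + X1 * DQ" by simp
  show ?thesis
    unfolding P1 P2 P3 A_def[symmetric] B_def[symmetric] X0_def[symmetric] X1_def[symmetric]
    using A0 B0 X00 assms key_eq by (simp add: field_simps)
qed

end
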